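(* Let $k\in\mathbb{Z}$ and $z\in\mathbb{C}$ with $|z|>e$. Then $$|W_k'(z)| \le \frac{1}{|z|}\frac{W_0(|z|)}{W_0(|z|)-1}.$$
   Context: $W_k$ denotes the $k$-th branch of the Lambert $W$ function (inverse of $w\mapsto we^w$) in the standard convention of Corless, Gonnet, Hare, Jeffrey and Knuth (1996); $W_0$ is the principal branch, real and increasing on $[-1/e,\infty)$. On a branch cut, values are defined by continuity from the upper half plane and $W_k'$ denotes the derivative of the fixed branch $W_k$ (directional derivative along the cut there). *)

theory Defs
  imports "HOL-Analysis.Analysis"
begin

text \<open>Branches of the Lambert W function (Corless--Gonnet--Hare--Jeffrey--Knuth convention,
  values on branch cuts by continuity from the upper half plane).
  For z \<noteq> 0 outside the exceptional segment, W_k(z) is characterised by the unwinding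
  identity  W_k(z) + Ln W_k(z) = Ln z + 2 pi i k  (principal Ln, Arg in (-pi, pi]),
  i.e. W_k(z) = omega(Ln z + 2 pi i k) with omega the Wright omega function.
  On the real segment [-1/e, 0) the branches k = 0 and k = -1 are the two real solutions
  (W_0 \<ge> -1, W_{-1} \<le> -1).  W_0(0) = 0; W_k(0) for k \<noteq> 0 is undefined (set to 0).\<close>

definition lambert_W :: "int \<Rightarrow> complex \<Rightarrow> complex" where
  "lambert_W k z =
    (if z = 0 then 0
     else if z \<in> \<real> \<and> - exp (-1) \<le> Re z \<and> Re z < 0 \<and> k \<in> {0, -1} then
       (if k = 0 then (THE w. w \<in> \<real> \<and> -1 \<le> Re w \<and> w * exp w = z)
        else (THE w. w \<in> \<real> \<and> Re w \<le> -1 \<and> w * exp w = z))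
     else (THE w. w \<noteq> 0 \<and> w + Ln w = Ln z + 2 * of_real pi * \<i> * of_int k))"

text \<open>Derivative of the fixed branch W_k: the complex derivative off the real axis, and the
  directional derivative along the real axis at real points (on the branch cut this is the
  derivative along the cut; off the cut it coincides with the complex derivative).\<close>

definition lambert_W_deriv :: "int \<Rightarrow> complex \<Rightarrow> complex" where
  "lambert_W_deriv k z =
    (if z \<in> \<real> then (THE D. (lambert_W k has_field_derivative D) (at z within \<real>))
     else deriv (lambert_W k) z)"

end

theory Submission
  imports Defs "HOL-Complex_Analysis.Complex_Analysis"
begin

definition gf :: "real \<Rightarrow> real \<Rightarrow> real" where
  "gf b t = (b - t) * cos t / sin t + ln ((b - t) / sin t)"

lemma gf_deriv:
  assumes "0 < t" "t < pi" "t < b"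
  shows "(gf b has_real_derivative
     - (((b-t)^2 + 2 * cos t * sin t * (b-t) + (sin t)^2)/((b-t)*(sin t)^2))) (at t)"
proof -
  have s: "sin t > 0" using assms by (simp add: sin_gt_zero)
  have u: "b - t > 0" using assms by simp
  have "((\<lambda>t. (b - t) * cos t / sin t + ln ((b - t) / sin t)) has_real_derivative
     ((- cos t - (b - t) * sin t) * sin t - (b - t) * cos t * cos t) / (sin t * sin t)
     + ((- sin t - (b-t) * cos t) / (sin t * sin t)) / ((b - t) / sin t)) (at t)"
    using s u
    apply (intro derivative_eq_intros)
    apply (rule derivative_eq_intros refl | simp)+
    apply (simp add: algebra_simps)
    done
  moreover have "((- cos t - (b - t) * sin t) * sin t - (b - t) * cos t * cos t) / (sin t * sin t)
     + ((- sin t - (b-t) * cos t) / (sin t * sin t)) / ((b - t) / sin t)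
     = - (((b-t)^2 + 2 * cos t * sin t * (b-t) + (sin t)^2)/((b-t)*(sin t)^2))"
  proof -
    have c2: "cos t * cos t = 1 - sin t * sin t"
      using sin_cos_squared_add[of t] by (simp add: power2_eq_square)
    show ?thesis using s u
      apply (simp add: field_simps power2_eq_square)
      using c2 by algebra
  qed
  ultimately show ?thesis unfolding gf_def[abs_def] by simp
qed

lemma gf_deriv_neg:
  assumes "0 < t" "t < pi" "t < b"
  shows "- (((b-t)^2 + 2 * cos t * sin t * (b-t) + (sin t)^2)/((b-t)*(sin t)^2)) < 0"
proof -
  have s: "sin t > 0" using assms by (simp add: sin_gt_zero)
  have u: "b - t > 0" using assms by simp
  have "(b-t)^2 + 2 * cos t * sin t * (b-t) + (sin t)^2 = (b - t + cos t * sin t)^2 + (sin t)^4"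
  proof -
    have h: "sin t * sin t * (sin t * sin t + cos t * cos t) = sin t * sin t"
      using sin_cos_squared_add[of t] by (simp add: power2_eq_square)
    show ?thesis unfolding power2_eq_square power4_eq_xxxx using h by algebra
  qed
  also have "\<dots> > 0" using s by (simp add: add_nonneg_pos)
  finally show ?thesis using s u by simp
qed

lemma gf_decr:
  assumes "0 < s" "s < t" "t < pi" "t < b"
  shows "gf b t < gf b s"
  using assms
  by (intro DERIV_neg_imp_decreasing[OF \<open>s<t\<close>])
     (meson gf_deriv gf_deriv_neg less_le_trans le_less_trans)


lemma gf_eq: "gf b t = cos t * ((b - t) / sin t) + ln ((b - t) / sin t)"
  by (simp add: gf_def)

lemma gf_top:
  assumes "0 < b"
  shows "filterlim (gf b) at_top (at_right 0)"
proof -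
  have ev: "\<forall>\<^sub>F t in at_right 0. 0 < sin (t::real)"
    unfolding eventually_at_right_field
  proof (intro exI conjI allI impI)
    show "(0::real) < pi" by simp
  next
    fix y :: real assume "0 < y" "y < pi" then show "0 < sin y" by (rule sin_gt_zero)
  qed
  have "((\<lambda>t. sin t) \<longlongrightarrow> sin 0) (at_right (0::real))"
    by (intro tendsto_intros)
  hence s0: "(sin \<longlongrightarrow> 0) (at_right (0::real))" by simp
  have "((\<lambda>t. b - t) \<longlongrightarrow> b - 0) (at_right 0)"
    by (intro tendsto_intros)
  hence R: "filterlim (\<lambda>t. (b - t) / sin t) at_top (at_right 0)"
    using assms s0 ev by (intro LIM_at_top_divide) auto
  have c: "((\<lambda>t. cos t) \<longlongrightarrow> cos 0) (at_right (0::real))"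
    by (intro tendsto_intros)
  have "filterlim (\<lambda>t. cos t * ((b - t) / sin t) + ln ((b - t) / sin t)) at_top (at_right 0)"
    apply (rule filterlim_at_top_add_at_top)
     apply (rule filterlim_tendsto_pos_mult_at_top[OF c _ R], simp)
    by (rule filterlim_compose[OF ln_at_top R])
  thus ?thesis by (simp add: gf_eq[abs_def])
qed

lemma gf_bot:
  assumes "0 < b" "b < pi"
  shows "filterlim (gf b) at_bot (at_left b)"
proof -
  have ev: "\<forall>\<^sub>F t in at_left b. 0 < (b - t) / sin t"
    unfolding eventually_at_left_field
    by (rule exI[of _ 0]) (use assms in \<open>auto intro!: divide_pos_pos sin_gt_zero\<close>)
  have "((\<lambda>t. (b - t) / sin t) \<longlongrightarrow> (b - b) / sin b) (at_left b)"
    using assms sin_gt_zero[of b] by (intro tendsto_intros) auto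
  hence R0: "((\<lambda>t. (b - t) / sin t) \<longlongrightarrow> 0) (at_left b)" by simp
  have R: "filterlim (\<lambda>t. (b - t) / sin t) (at_right 0) (at_left b)"
    unfolding filterlim_at using ev R0 by (auto elim: eventually_mono)
  have c: "((\<lambda>t. cos t * ((b - t) / sin t)) \<longlongrightarrow> cos b * 0) (at_left b)"
    by (intro tendsto_intros R0)
  have "filterlim (\<lambda>t. cos t * ((b - t) / sin t) + ln ((b - t) / sin t)) at_bot (at_left b)"
    unfolding filterlim_tendsto_add_at_bot_iff[OF c]
    by (rule filterlim_compose[OF ln_at_0 R])
  thus ?thesis by (simp add: gf_eq[abs_def])
qed


lemma gf_exists:
  assumes "0 < b" "1 < a"
  shows "\<exists>t. 0 < t \<and> t < b \<and> t < pi \<and> gf b t = a"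
proof -
  have "\<forall>\<^sub>F t in at_right 0. a < gf b t"
    using gf_top[OF assms(1)] unfolding filterlim_at_top_dense by blast
  then obtain d where d: "d > 0" "\<And>y. 0 < y \<Longrightarrow> y < d \<Longrightarrow> a < gf b y"
    unfolding eventually_at_right_field by blast
  define t1 where "t1 = min d (min b pi) / 2"
  have t1: "0 < t1" "t1 < d" "t1 < b" "t1 < pi" "a < gf b t1"
  proof -
    have "min d (min b pi) > 0" "min d (min b pi) \<le> d" "min d (min b pi) \<le> b"
      "min d (min b pi) \<le> pi" using d assms pi_gt_zero by auto
    thus "0 < t1" "t1 < d" "t1 < b" "t1 < pi" unfolding t1_def by linarith+
    thus "a < gf b t1" using d by auto
  qed
  obtain t2 where t2: "t1 < t2" "t2 < b" "t2 < pi" "gf b t2 < a"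
  proof (cases "2 * pi / 3 < b")
    case True
    define R where "R = (b - 2 * pi / 3) / sin (2 * pi / 3)"
    have R: "R > 0" using True unfolding R_def sin_120 by simp
    have "ln R \<le> R / exp 1"
    proof -
      have "ln (R / exp 1) \<le> R / exp 1 - 1" using R by (intro ln_le_minus_one) simp
      thus ?thesis using R by (simp add: ln_div)
    qed
    moreover have "R / exp 1 \<le> R / 2"
      using R exp_ge_add_one_self[of 1] by (intro divide_left_mono) auto
    ultimately have "ln R \<le> R / 2" by linarith
    hence "gf b (2 * pi / 3) \<le> 0"
      unfolding gf_eq cos_120 R_def[symmetric] by simp
    moreover have "t1 < 2 * pi / 3"
    proof -
      have "t1 \<le> pi / 2" unfolding t1_def by simp
      thus ?thesis using pi_gt_zero by linarith
    qed
    ultimately show ?thesis using True assms pi_gt_zero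
      by (intro that[of "2 * pi / 3"]) auto
  next
    case False
    hence bpi: "b < pi" using pi_gt_zero by linarith
    have "\<forall>\<^sub>F t in at_left b. gf b t < a"
      using gf_bot[OF assms(1) bpi] unfolding filterlim_at_bot_dense by blast
    moreover have "\<forall>\<^sub>F t in at_left b. t1 < t"
      unfolding eventually_at_left_field using t1 by blast
    ultimately have "\<forall>\<^sub>F t in at_left b. t1 < t \<and> gf b t < a"
      by eventually_elim auto
    then obtain e where e: "e < b" "\<And>y. e < y \<Longrightarrow> y < b \<Longrightarrow> t1 < y \<and> gf b y < a"
      unfolding eventually_at_left_field by blast
    define y where "y = (max e t1 + b) / 2"
    have "e < y" "y < b" unfolding y_def using e t1 by auto
    then show ?thesis using e(2)[of y] that bpi by auto
  qed
  have cont: "\<forall>x. t1 \<le> x \<and> x \<le> t2 \<longrightarrow> isCont (gf b) x"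
  proof (intro allI impI)
    fix x assume x: "t1 \<le> x \<and> x \<le> t2"
    hence "0 < x" "x < pi" "x < b" using t1 t2 by auto
    thus "isCont (gf b) x" using gf_deriv DERIV_isCont by blast
  qed
  obtain t where "t1 \<le> t" "t \<le> t2" "gf b t = a"
    using IVT2[of "gf b" t2 a t1, OF _ _ _ cont] t1 t2 by auto
  thus ?thesis using t1 t2 by (intro exI[of _ t]) auto
qed


definition FF :: "complex \<Rightarrow> complex" where "FF w = w + Ln w"

lemma polar_Re: "w \<noteq> 0 \<Longrightarrow> Re w = norm w * cos (Arg w)"
  by (simp add: cos_Arg)
lemma polar_Im: "w \<noteq> 0 \<Longrightarrow> Im w = norm w * sin (Arg w)"
  by (simp add: sin_Arg)

lemma Re_FF: "w \<noteq> 0 \<Longrightarrow> Re (FF w) = norm w * cos (Arg w) + ln (norm w)"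
  by (simp add: FF_def polar_Re)
lemma Im_FF: "w \<noteq> 0 \<Longrightarrow> Im (FF w) = norm w * sin (Arg w) + Arg w"
  by (simp add: FF_def polar_Im Arg_def)

lemma FF_not_nonpos:
  assumes "w \<noteq> 0" "1 < Re (FF w)"
  shows "w \<notin> \<real>\<^sub>\<le>\<^sub>0"
proof
  assume "w \<in> \<real>\<^sub>\<le>\<^sub>0"
  hence "Re w < 0" "Im w = 0" using assms(1) by (auto simp: complex_nonpos_Reals_iff complex_eq_iff)
  hence "Arg w = pi" by (simp add: Arg_eq_pi)
  hence "Re (FF w) = - norm w + ln (norm w)" using assms(1) by (simp add: Re_FF)
  also have "\<dots> \<le> -1" using ln_le_minus_one[of "norm w"] assms(1) by simp
  finally show False using assms(2) by simp
qed

lemma Arg_pos_of_FF: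
  assumes "w \<noteq> 0" "1 < Re (FF w)" "0 < Im (FF w)"
  shows "0 < Arg w \<and> Arg w < pi \<and> Arg w < Im (FF w) \<and>
         norm w = (Im (FF w) - Arg w) / sin (Arg w) \<and> gf (Im (FF w)) (Arg w) = Re (FF w)"
proof -
  have np: "w \<notin> \<real>\<^sub>\<le>\<^sub>0" using FF_not_nonpos assms by blast
  have "Arg w \<noteq> pi"
    using np assms(1) by (auto simp: Arg_eq_pi complex_nonpos_Reals_iff)
  hence lt: "Arg w < pi" using Arg_le_pi[of w] by linarith
  have gt: "-pi < Arg w" by (rule mpi_less_Arg)
  have pos: "0 < Arg w"
  proof (rule ccontr)
    assume "\<not> 0 < Arg w"
    hence "0 \<le> sin (- Arg w)" using gt by (intro sin_ge_zero) auto
    hence "sin (Arg w) \<le> 0" by simp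
    hence "norm w * sin (Arg w) \<le> 0" by (simp add: mult_nonneg_nonpos)
    thus False using assms(3) \<open>\<not> 0 < Arg w\<close> Im_FF[OF assms(1)] by linarith
  qed
  have s: "sin (Arg w) > 0" using pos lt by (simp add: sin_gt_zero)
  have eqI: "norm w * sin (Arg w) = Im (FF w) - Arg w" using Im_FF[OF assms(1)] by simp
  hence nw: "norm w = (Im (FF w) - Arg w) / sin (Arg w)" using s by (simp add: field_simps)
  have "Arg w < Im (FF w)" using eqI s assms(1) by (smt (verit) mult_pos_pos zero_less_norm_iff)
  moreover have "gf (Im (FF w)) (Arg w) = Re (FF w)"
    unfolding gf_eq Re_FF[OF assms(1)] nw[symmetric] by simp
  ultimately show ?thesis using pos lt nw by simp
qed


lemma FF_cnj: "w \<notin> \<real>\<^sub>\<le>\<^sub>0 \<Longrightarrow> FF (cnj w) = cnj (FF w)"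
  by (simp add: FF_def cnj_Ln)

lemma polar_eq: "w = rcis (norm w) (Arg w)"
  by (simp add: rcis_cmod_Arg)

lemma FF_unique_pos:
  assumes "w1 \<noteq> 0" "w2 \<noteq> 0" "FF w1 = FF w2" "1 < Re (FF w1)" "0 < Im (FF w1)"
  shows "w1 = w2"
proof -
  define b where "b = Im (FF w1)"
  define a where "a = Re (FF w1)"
  have h1: "0 < Arg w1 \<and> Arg w1 < pi \<and> Arg w1 < b \<and>
         norm w1 = (b - Arg w1) / sin (Arg w1) \<and> gf b (Arg w1) = a"
    using Arg_pos_of_FF[OF assms(1,4,5)] unfolding a_def b_def by simp
  have h2: "0 < Arg w2 \<and> Arg w2 < pi \<and> Arg w2 < b \<and>
         norm w2 = (b - Arg w2) / sin (Arg w2) \<and> gf b (Arg w2) = a"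
    using Arg_pos_of_FF[OF assms(2)] assms(3-5) unfolding a_def b_def by simp
  have "Arg w1 = Arg w2"
  proof (rule ccontr)
    assume "Arg w1 \<noteq> Arg w2"
    then consider "Arg w1 < Arg w2" | "Arg w2 < Arg w1" by linarith
    thus False
    proof cases
      case 1 thus False using gf_decr[of "Arg w1" "Arg w2" b] h1 h2 by simp
    next
      case 2 thus False using gf_decr[of "Arg w2" "Arg w1" b] h1 h2 by simp
    qed
  qed
  moreover hence "norm w1 = norm w2" using h1 h2 by simp
  ultimately show ?thesis using polar_eq[of w1] polar_eq[of w2] by simp
qed

lemma FF_zero_case:
  assumes "w \<noteq> 0" "1 < Re (FF w)" "Im (FF w) = 0"
  shows "w = of_real (norm w) \<and> norm w + ln (norm w) = Re (FF w)"
proof -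
  have np: "w \<notin> \<real>\<^sub>\<le>\<^sub>0" using FF_not_nonpos assms by blast
  have "Arg w \<noteq> pi"
    using np assms(1) by (auto simp: Arg_eq_pi complex_nonpos_Reals_iff)
  hence lt: "Arg w < pi" using Arg_le_pi[of w] by linarith
  have gt: "-pi < Arg w" by (rule mpi_less_Arg)
  have I: "norm w * sin (Arg w) + Arg w = 0" using Im_FF[OF assms(1)] assms(3) by simp
  have "Arg w = 0"
  proof (rule ccontr)
    assume ne: "Arg w \<noteq> 0"
    then consider "0 < Arg w" | "Arg w < 0" by linarith
    thus False
    proof cases
      case 1
      hence "sin (Arg w) > 0" using lt by (simp add: sin_gt_zero)
      hence "norm w * sin (Arg w) > 0" using assms(1) by simp
      thus False using I 1 by linarith
    next
      case 2
      hence "sin (- Arg w) > 0" using gt by (intro sin_gt_zero) auto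
      hence "norm w * sin (Arg w) < 0" using assms(1) by (simp add: mult_pos_neg)
      thus False using I 2 by linarith
    qed
  qed
  hence "w = of_real (norm w)" using polar_eq[of w] by (simp add: rcis_zero_arg)
  moreover have "norm w + ln (norm w) = Re (FF w)" using Re_FF[OF assms(1)] \<open>Arg w = 0\<close> by simp
  ultimately show ?thesis by simp
qed

lemma FF_unique:
  assumes "w1 \<noteq> 0" "w2 \<noteq> 0" "FF w1 = FF w2" "1 < Re (FF w1)"
  shows "w1 = w2"
proof -
  consider "0 < Im (FF w1)" | "Im (FF w1) < 0" | "Im (FF w1) = 0" by linarith
  thus ?thesis
  proof cases
    case 1 thus ?thesis using FF_unique_pos[OF assms] by simp
  next
    case 2
    have n1: "w1 \<notin> \<real>\<^sub>\<le>\<^sub>0" using FF_not_nonpos[OF assms(1,4)] .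
    have n2: "w2 \<notin> \<real>\<^sub>\<le>\<^sub>0" using FF_not_nonpos[OF assms(2)] assms(3,4) by simp
    have c1: "FF (cnj w1) = cnj (FF w1)" by (rule FF_cnj[OF n1])
    have c2: "FF (cnj w2) = cnj (FF w1)" using FF_cnj[OF n2] assms(3) by simp
    have "cnj w1 = cnj w2"
    proof (rule FF_unique_pos)
      show "cnj w1 \<noteq> 0" "cnj w2 \<noteq> 0" using assms(1,2) by simp_all
      show "FF (cnj w1) = FF (cnj w2)" using c1 c2 by simp
      show "1 < Re (FF (cnj w1))" using c1 assms(4) by simp
      show "0 < Im (FF (cnj w1))" using c1 2 by simp
    qed
    thus ?thesis by simp
  next
    case 3
    have z1: "w1 = of_real (norm w1) \<and> norm w1 + ln (norm w1) = Re (FF w1)"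
      using FF_zero_case[OF assms(1,4) 3] .
    have z2: "w2 = of_real (norm w2) \<and> norm w2 + ln (norm w2) = Re (FF w1)"
      using FF_zero_case[of w2] assms 3 by auto
    have "norm w1 = norm w2"
    proof (rule ccontr)
      assume "norm w1 \<noteq> norm w2"
      then consider "norm w1 < norm w2" | "norm w2 < norm w1" by linarith
      thus False
      proof cases
        case 1
        hence "ln (norm w1) < ln (norm w2)" using assms(1) by (intro ln_less_cancel_iff[THEN iffD2]) auto
        thus False using z1 z2 1 by linarith
      next
        case 2
        hence "ln (norm w2) < ln (norm w1)" using assms(2) by (intro ln_less_cancel_iff[THEN iffD2]) auto
        thus False using z1 z2 2 by linarith
      qed
    qed
    thus ?thesis using z1 z2 by simp
  qed
qed


lemma FF_exists_pos:
  assumes "1 < a" "0 < b"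
  shows "\<exists>w. w \<noteq> 0 \<and> FF w = Complex a b"
proof -
  obtain t where t: "0 < t" "t < b" "t < pi" "gf b t = a" using gf_exists[OF assms(2,1)] by blast
  have s: "sin t > 0" using t by (simp add: sin_gt_zero)
  define R where "R = (b - t) / sin t"
  have R: "R > 0" unfolding R_def using s t by simp
  define w where "w = rcis R t"
  have nw: "norm w = R" unfolding w_def using R by simp
  have w0: "w \<noteq> 0" using nw R by auto
  have "sgn w = cis t" unfolding w_def using R by (simp add: rcis_def sgn_mult sgn_of_real)
  hence aw: "Arg w = t" using t by (intro cis_Arg_unique) auto
  have "FF w = Complex a b"
  proof (rule complex_eqI)
    show "Re (FF w) = Re (Complex a b)"
      using t(4) unfolding Re_FF[OF w0] nw aw gf_eq R_def[symmetric] by (simp add: mult.commute)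
    show "Im (FF w) = Im (Complex a b)"
      unfolding Im_FF[OF w0] nw aw R_def using s by simp
  qed
  thus ?thesis using w0 by blast
qed

lemma FF_exists:
  assumes "1 < Re z"
  shows "\<exists>w. w \<noteq> 0 \<and> FF w = z"
proof -
  consider "0 < Im z" | "Im z < 0" | "Im z = 0" by linarith
  thus ?thesis
  proof cases
    case 1 thus ?thesis using FF_exists_pos[OF assms 1] by simp
  next
    case 2
    obtain w where w: "w \<noteq> 0" "FF w = Complex (Re z) (- Im z)"
      using FF_exists_pos[OF assms, of "- Im z"] 2 by auto
    have "w \<notin> \<real>\<^sub>\<le>\<^sub>0" using FF_not_nonpos[OF w(1)] w(2) assms by simp
    hence "FF (cnj w) = z" using w(2) by (simp add: FF_cnj complex_eq_iff)
    thus ?thesis using w(1) by (intro exI[of _ "cnj w"]) simp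
  next
    case 3
    have "\<exists>x. 1 \<le> x \<and> x \<le> Re z \<and> x + ln x = Re z"
    proof (rule IVT)
      show "1 + ln 1 \<le> Re z" using assms by simp
      show "Re z \<le> Re z + ln (Re z)" using assms by simp
      show "1 \<le> Re z" using assms by simp
      show "\<forall>x. 1 \<le> x \<and> x \<le> Re z \<longrightarrow> isCont (\<lambda>x. x + ln x) x"
        by (auto intro!: continuous_intros)
    qed
    then obtain x where x: "1 \<le> x" "x + ln x = Re z" by blast
    have "FF (of_real x) = z"
      using x 3 by (simp add: FF_def Ln_of_real complex_eq_iff)
    thus ?thesis using x by (intro exI[of _ "of_real x"]) auto
  qed
qed


definition omg :: "complex \<Rightarrow> complex" where
  "omg z = (THE w. w \<noteq> 0 \<and> FF w = z)"

lemma omg_eq: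
  assumes "w \<noteq> 0" "FF w = z" "1 < Re z"
  shows "omg z = w"
  unfolding omg_def
proof (rule the_equality)
  show "w \<noteq> 0 \<and> FF w = z" using assms by simp
  fix v assume "v \<noteq> 0 \<and> FF v = z"
  thus "v = w" using FF_unique[of v w] assms by simp
qed

lemma omg:
  assumes "1 < Re z"
  shows "omg z \<noteq> 0 \<and> FF (omg z) = z"
proof -
  obtain w where "w \<noteq> 0" "FF w = z" using FF_exists[OF assms] by blast
  thus ?thesis using omg_eq[OF _ _ assms] by simp
qed

lemma omg_notnp:
  assumes "1 < Re z"
  shows "omg z \<notin> \<real>\<^sub>\<le>\<^sub>0"
  using FF_not_nonpos[of "omg z"] omg[OF assms] assms by simp

lemma omg_deriv:
  assumes "1 < Re z"
  shows "(omg has_field_derivative omg z / (omg z + 1)) (at z)"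
proof -
  define S where "S = (- \<real>\<^sub>\<le>\<^sub>0) \<inter> FF -` {z. 1 < Re z}"
  have cFF: "continuous_on (- \<real>\<^sub>\<le>\<^sub>0) FF"
    unfolding FF_def by (intro continuous_intros) auto
  have oS: "open S" unfolding S_def
    by (rule continuous_open_preimage[OF cFF]) (auto intro: open_halfspace_Re_gt)
  have hS: "FF holomorphic_on S"
    unfolding FF_def S_def by (intro holomorphic_intros) auto
  have iS: "inj_on FF S"
  proof (rule inj_onI)
    fix x y assume "x \<in> S" "y \<in> S" "FF x = FF y"
    have "x \<noteq> 0" "y \<noteq> 0" "1 < Re (FF x)" using \<open>x \<in> S\<close> \<open>y \<in> S\<close> unfolding S_def by auto
    thus "x = y" using FF_unique \<open>FF x = FF y\<close> by blast
  qed
  obtain g where g1: "g holomorphic_on (FF ` S)"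
     and g2: "\<And>z. z \<in> S \<Longrightarrow> deriv FF z * deriv g (FF z) = 1"
     and g3: "\<And>z. z \<in> S \<Longrightarrow> g (FF z) = z"
    using holomorphic_has_inverse[OF hS oS iS] by blast
  have inS: "omg u \<in> S" if "1 < Re u" for u
    using omg[OF that] omg_notnp[OF that] that unfolding S_def by auto
  have img: "FF ` S = {z. 1 < Re z}"
  proof
    show "FF ` S \<subseteq> {z. 1 < Re z}" unfolding S_def by auto
    show "{z. 1 < Re z} \<subseteq> FF ` S"
    proof
      fix u assume "u \<in> {z. 1 < Re z}"
      hence "1 < Re u" by simp
      hence "FF (omg u) = u" "omg u \<in> S" using omg inS by auto
      thus "u \<in> FF ` S" by (metis image_eqI)
    qed
  qed
  have geq: "g u = omg u" if "1 < Re u" for u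
    using g3[OF inS[OF that]] omg[OF that] by simp
  define w where "w = omg z"
  have w0: "w \<noteq> 0" and wS: "w \<in> S" and Fw: "FF w = z"
    using omg[OF assms] inS[OF assms] unfolding w_def by auto
  have wnp: "w \<notin> \<real>\<^sub>\<le>\<^sub>0" using omg_notnp[OF assms] unfolding w_def .
  have "(FF has_field_derivative 1 + inverse w) (at w)"
    unfolding FF_def[abs_def] using wnp by (intro derivative_eq_intros has_field_derivative_Ln) auto
  hence dF: "deriv FF w = 1 + inverse w" by (rule DERIV_imp_deriv)
  have w1: "w + 1 \<noteq> 0"
  proof
    assume "w + 1 = 0" hence "w = -1" by (simp add: eq_neg_iff_add_eq_0)
    thus False using wnp by simp
  qed
  have "(1 + inverse w) * deriv g z = 1" using g2[OF wS] dF Fw by simp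
  hence dg: "deriv g z = w / (w + 1)" using w0 w1 by (simp add: field_simps)
  have "(g has_field_derivative deriv g z) (at z)"
    using g1 unfolding img by (rule holomorphic_derivI) (use assms open_halfspace_Re_gt in auto)
  hence "(g has_field_derivative w / (w + 1)) (at z)" using dg by simp
  thus ?thesis unfolding w_def
    by (rule has_field_derivative_transform_within_open[OF _ open_halfspace_Re_gt[of 1]])
       (use assms geq in auto)
qed


lemma at_Reals_nontriv:
  assumes "(z::complex) \<in> \<real>"
  shows "at z within \<real> \<noteq> bot"
proof -
  have "z islimpt \<real>"
    unfolding islimpt_approachable
  proof (intro allI impI)
    fix e :: real assume e: "e > 0"
    show "\<exists>x'\<in>\<real>. x' \<noteq> z \<and> dist x' z < e"
      using assms e by (intro bexI[of _ "z + of_real (e/2)"]) (auto simp: dist_norm)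
  qed
  thus ?thesis using trivial_limit_within by blast
qed

lemma THE_deriv_Reals:
  assumes "(z::complex) \<in> \<real>" "(f has_field_derivative D) (at z within \<real>)"
  shows "(THE D. (f has_field_derivative D) (at z within \<real>)) = D"
proof (rule the_equality)
  show "(f has_field_derivative D) (at z within \<real>)" by fact
  fix E assume "(f has_field_derivative E) (at z within \<real>)"
  thus "E = D" using has_field_derivative_unique[OF _ assms(2) at_Reals_nontriv[OF assms(1)]] by blast
qed

lemma LW_eq:
  assumes "exp 1 < norm z"
  shows "lambert_W k z = omg (Ln z + 2 * of_real pi * \<i> * of_int k)"
proof -
  have z0: "z \<noteq> 0" using assms by auto
  have "\<not> (z \<in> \<real> \<and> - exp (-1) \<le> Re z \<and> Re z < 0)"
  proof
    assume h: "z \<in> \<real> \<and> - exp (-1) \<le> Re z \<and> Re z < 0"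
    hence "norm z = - Re z" by (auto elim!: Reals_cases)
    also have "\<dots> \<le> exp (-1)" using h by simp
    also have "\<dots> < exp 1" by simp
    finally show False using assms by simp
  qed
  thus ?thesis unfolding lambert_W_def omg_def FF_def using z0 by auto
qed

lemma Re_arg_gt1:
  assumes "exp 1 < norm z"
  shows "1 < Re (Ln z + 2 * of_real pi * \<i> * of_int k)"
proof -
  have z0: "z \<noteq> 0" using assms by auto
  have "ln (exp 1) < ln (norm z)" using assms by (intro ln_less_cancel_iff[THEN iffD2]) auto
  thus ?thesis using z0 by simp
qed


lemma LW_deriv_val:
  assumes "exp 1 < norm z"
  shows "lambert_W_deriv k z = lambert_W k z / (lambert_W k z + 1) * inverse z"
proof -
  define c where "c = 2 * of_real pi * \<i> * (of_int k :: complex)"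
  define w where "w = lambert_W k z"
  define D where "D = w / (w + 1) * inverse z"
  have z0: "z \<noteq> 0" using assms by auto
  have wz: "w = omg (Ln z + c)" unfolding w_def c_def by (rule LW_eq[OF assms])
  have gt1: "1 < Re (Ln z + c)" unfolding c_def by (rule Re_arg_gt1[OF assms])
  have LWx: "lambert_W k x = omg (Ln x + c)" if "exp 1 < norm x" for x
    unfolding c_def by (rule LW_eq[OF that])
  show ?thesis
  proof (cases "z \<in> \<real>\<^sub>\<le>\<^sub>0")
    case False
    have dL: "((\<lambda>x. Ln x + c) has_field_derivative inverse z) (at z)"
      using DERIV_add[OF has_field_derivative_Ln[OF False] DERIV_const[of c]] by simp
    have d1: "((\<lambda>x. omg (Ln x + c)) has_field_derivative D) (at z)"
      unfolding D_def wz using DERIV_chain2[OF omg_deriv[OF gt1] dL] by simp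
    define T where "T = {x::complex. exp 1 < norm x} \<inter> - \<real>\<^sub>\<le>\<^sub>0"
    have oT: "open T" unfolding T_def
      by (intro open_Int open_Compl closed_nonpos_Reals_complex open_Collect_less continuous_intros)
    have d2: "(lambert_W k has_field_derivative D) (at z)"
      by (rule has_field_derivative_transform_within_open[OF d1 oT])
         (use assms False LWx in \<open>auto simp: T_def\<close>)
    show ?thesis
    proof (cases "z \<in> \<real>")
      case True
      thus ?thesis unfolding lambert_W_deriv_def w_def[symmetric] D_def[symmetric]
        using THE_deriv_Reals[OF True has_field_derivative_at_within[OF d2]] by simp
    next
      case False
      thus ?thesis unfolding lambert_W_deriv_def w_def[symmetric] D_def[symmetric]
        using DERIV_imp_deriv[OF d2] by simp
    qed
  next
    case True
    hence zR: "z \<in> \<real>" and zneg: "Re z < 0" using z0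
      by (auto simp: complex_nonpos_Reals_iff complex_eq_iff complex_is_Real_iff)
    have lnm: "Ln x = Ln (- x) + \<i> * pi" if "x \<in> \<real>" "Re x < 0" for x
    proof -
      have "- x \<noteq> 0" using that by auto
      from Ln_minus[OF this] show ?thesis using that by (auto simp: complex_is_Real_iff)
    qed
    have np: "- z \<notin> \<real>\<^sub>\<le>\<^sub>0" using zneg by (simp add: complex_nonpos_Reals_iff)
    have dm: "((\<lambda>x. - x) has_field_derivative -1) (at z)" by (intro derivative_eq_intros) auto
    have dL0: "((\<lambda>x. Ln (- x)) has_field_derivative inverse (- z) * -1) (at z)"
      by (rule DERIV_chain2[OF has_field_derivative_Ln[OF np] dm])
    have dL: "((\<lambda>x. Ln (- x) + \<i> * pi + c) has_field_derivative inverse z) (at z)"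
      using DERIV_add[OF DERIV_add[OF dL0 DERIV_const[of "\<i> * pi"]] DERIV_const[of c]] z0
      by simp
    have eqz: "Ln (- z) + \<i> * pi + c = Ln z + c" using lnm[OF zR zneg] by simp
    have d1: "((\<lambda>x. omg (Ln (- x) + \<i> * pi + c)) has_field_derivative D) (at z)"
      unfolding D_def wz using DERIV_chain2[OF omg_deriv[OF gt1[folded eqz]] dL] eqz by simp
    have d2: "(lambert_W k has_field_derivative D) (at z within \<real>)"
    proof (rule has_field_derivative_transform_within[OF has_field_derivative_at_within[OF d1]])
      show "0 < norm z - exp 1" using assms by simp
      show "z \<in> \<real>" by fact
      fix x assume x: "x \<in> \<real>" "dist x z < norm z - exp 1"
      have "norm z \<le> norm x + dist x z" using norm_triangle_ineq[of x "z - x"] norm_minus_commute[of x z] by (simp add: dist_norm)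
      hence xe: "exp 1 < norm x" using x by simp
      have "Re x < 0"
      proof -
        have "dist x z < norm z" using x(2) exp_gt_zero[of 1] by linarith
        hence "norm (x - z) < norm z" by (simp add: dist_norm)
        moreover have "norm z = - Re z" using zR zneg by (auto elim!: Reals_cases)
        moreover have "norm (x - z) = \<bar>Re x - Re z\<bar>" using x(1) zR by (auto elim!: Reals_cases simp flip: of_real_diff)
        ultimately show ?thesis by linarith
      qed
      thus "omg (Ln (- x) + \<i> * pi + c) = lambert_W k x"
        using LWx[OF xe] lnm[OF x(1)] by simp
    qed
    thus ?thesis unfolding lambert_W_deriv_def w_def[symmetric] D_def[symmetric]
      using THE_deriv_Reals[OF zR d2] zR by simp
  qed
qed


lemma W0_real:
  assumes "exp 1 < r"
  defines "X \<equiv> Re (lambert_W 0 (of_real r))"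
  shows "1 < X \<and> X + ln X = ln r"
proof -
  have nr: "exp 1 < norm (complex_of_real r)" using assms(1) exp_gt_zero[of 1] by simp
  have r0: "r > 0" using assms(1) exp_gt_zero[of 1] by linarith
  define u where "u = lambert_W 0 (of_real r)"
  have ueq: "u = omg (Ln (of_real r) + 2 * of_real pi * \<i> * of_int 0)"
    unfolding u_def by (rule LW_eq[OF nr])
  have gt: "1 < Re (Ln (of_real r) + 2 * of_real pi * \<i> * of_int 0)" by (rule Re_arg_gt1[OF nr])
  have o: "u \<noteq> 0 \<and> FF u = Ln (of_real r) + 2 * of_real pi * \<i> * of_int 0"
    unfolding ueq by (rule omg[OF gt])
  have Ln_r: "Ln (of_real r) = of_real (ln r)" using r0 by (simp add: Ln_of_real)
  have "u = of_real (norm u) \<and> norm u + ln (norm u) = Re (FF u)"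
    using o gt Ln_r by (intro FF_zero_case) auto
  hence X: "X = norm u" "norm u + ln (norm u) = ln r"
    using o Ln_r unfolding X_def u_def[symmetric] by (metis Re_complex_of_real, simp)
  have "1 < norm u"
  proof (rule ccontr)
    assume "\<not> 1 < norm u"
    hence "ln (norm u) \<le> 0" using o by simp
    moreover have "1 < ln r" using assms(1) r0 by (metis ln_exp ln_less_cancel_iff exp_gt_zero)
    ultimately show False using X(2) \<open>\<not> 1 < norm u\<close> by linarith
  qed
  thus ?thesis using X by simp
qed

theorem theorem4:
  fixes k :: int and z :: complex
  assumes "norm z > exp 1"
  shows "norm (lambert_W_deriv k z) \<le>
    (1 / norm z) * (Re (lambert_W 0 (of_real (norm z))) /
                    (Re (lambert_W 0 (of_real (norm z))) - 1))"
proof -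
  define X where "X = Re (lambert_W 0 (of_real (norm z)))"
  have XX: "1 < X" "X + ln X = ln (norm z)" using W0_real[OF assms] unfolding X_def by auto
  define w where "w = lambert_W k z"
  have z0: "z \<noteq> 0" using assms by auto
  have gt: "1 < Re (Ln z + 2 * of_real pi * \<i> * of_int k)" by (rule Re_arg_gt1[OF assms])
  have o: "w \<noteq> 0 \<and> FF w = Ln z + 2 * of_real pi * \<i> * of_int k"
    unfolding w_def LW_eq[OF assms] by (rule omg[OF gt])
  have "Re (FF w) = ln (norm z)" using o z0 by simp
  hence "Re w + ln (norm w) = ln (norm z)" using o by (simp add: FF_def)
  hence "norm w + ln (norm w) \<ge> X + ln X" using XX complex_Re_le_cmod[of w] by linarith
  hence wX: "norm w \<ge> X"
  proof -
    assume h: "norm w + ln (norm w) \<ge> X + ln X"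
    show ?thesis
    proof (rule ccontr)
      assume "\<not> X \<le> norm w"
      hence "ln (norm w) < ln X" using o XX(1) by (intro ln_less_cancel_iff[THEN iffD2]) auto
      thus False using h \<open>\<not> X \<le> norm w\<close> by linarith
    qed
  qed
  have w1: "norm (w + 1) \<ge> norm w - 1"
    using norm_triangle_ineq2[of w "-1"] by simp
  have pos: "norm w - 1 > 0" using wX XX by linarith
  have "norm (lambert_W_deriv k z) = norm w / norm (w + 1) * (1 / norm z)"
    unfolding LW_deriv_val[OF assms] w_def[symmetric]
    by (simp add: norm_mult norm_divide norm_inverse divide_inverse)
  also have "\<dots> \<le> norm w / (norm w - 1) * (1 / norm z)"
  proof (intro mult_right_mono divide_left_mono)
    show "0 < norm (w + 1) * (norm w - 1)" using pos w1 by (intro mult_pos_pos) auto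
  qed (use pos w1 in auto)
  also have "\<dots> \<le> X / (X - 1) * (1 / norm z)"
  proof (intro mult_right_mono)
    show "norm w / (norm w - 1) \<le> X / (X - 1)"
      using pos XX wX by (simp add: field_simps)
  qed simp
  finally show ?thesis unfolding X_def by (simp add: mult.commute)
qed

end
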